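(* Let $\Gamma$ be a finite simple undirected graph with at least one edge, whose automorphism group $G$ acts primitively on the vertex set, and let $r$ be the chromatic number of $\Gamma$. Then $\Gamma$ does not contain a subgraph isomorphic to the complete graph on $r+1$ vertices with one edge removed.
   Context: A permutation group is primitive if it is transitive and preserves no equivalence relation other than equality and the universal relation. *)

theory Defs
  imports Main
begin

definition simple_graph :: "'a set \<Rightarrow> ('a \<Rightarrow> 'a \<Rightarrow> bool) \<Rightarrow> bool" where
  "simple_graph V E \<longleftrightarrow> finite V \<and>
     (\<forall>x y. E x y \<longrightarrow> x \<in> V \<and> y \<in> V) \<and>
     (\<forall>x y. E x y \<longrightarrow> E y x) \<and> (\<forall>x. \<not> E x x)"

definition has_edge :: "'a set \<Rightarrow> ('a \<Rightarrow> 'a \<Rightarrow> bool) \<Rightarrow> bool" where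
  "has_edge V E \<longleftrightarrow> (\<exists>x\<in>V. \<exists>y\<in>V. E x y)"

definition graph_aut :: "'a set \<Rightarrow> ('a \<Rightarrow> 'a \<Rightarrow> bool) \<Rightarrow> ('a \<Rightarrow> 'a) set" where
  "graph_aut V E = {f. bij_betw f V V \<and> (\<forall>x\<in>V. \<forall>y\<in>V. E (f x) (f y) \<longleftrightarrow> E x y)}"

definition primitive_on :: "('a \<Rightarrow> 'a) set \<Rightarrow> 'a set \<Rightarrow> bool" where
  "primitive_on G V \<longleftrightarrow>
     (\<forall>x\<in>V. \<forall>y\<in>V. \<exists>g\<in>G. g x = y) \<and>
     (\<forall>R. equiv V R \<longrightarrow> (\<forall>g\<in>G. \<forall>(x,y)\<in>R. (g x, g y) \<in> R) \<longrightarrow>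
          R = Id_on V \<or> R = V \<times> V)"

definition proper_colouring :: "'a set \<Rightarrow> ('a \<Rightarrow> 'a \<Rightarrow> bool) \<Rightarrow> nat \<Rightarrow> ('a \<Rightarrow> nat) \<Rightarrow> bool" where
  "proper_colouring V E k c \<longleftrightarrow> (\<forall>v\<in>V. c v < k) \<and>
     (\<forall>x\<in>V. \<forall>y\<in>V. E x y \<longrightarrow> c x \<noteq> c y)"

definition chromatic_number :: "'a set \<Rightarrow> ('a \<Rightarrow> 'a \<Rightarrow> bool) \<Rightarrow> nat" where
  "chromatic_number V E = (LEAST k. \<exists>c. proper_colouring V E k c)"

text \<open>The graph contains a (not necessarily induced) subgraph isomorphic to the complete
  graph on the n vertices {0..<n} with the edge {0,1} removed: an injective map of
  {0..<n} into V sending every other pair of distinct indices to an edge.\<close>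
definition contains_Kn_minus_edge :: "'a set \<Rightarrow> ('a \<Rightarrow> 'a \<Rightarrow> bool) \<Rightarrow> nat \<Rightarrow> bool" where
  "contains_Kn_minus_edge V E n \<longleftrightarrow> (\<exists>\<phi>. inj_on \<phi> {0..<n} \<and> \<phi> ` {0..<n} \<subseteq> V \<and>
     (\<forall>i<n. \<forall>j<n. i \<noteq> j \<and> {i, j} \<noteq> {0, 1} \<longrightarrow> E (\<phi> i) (\<phi> j)))"

end

theory Submission
  imports Defs
begin

lemma neq01: "2 \<le> i \<or> 2 \<le> j \<Longrightarrow> {i, j} \<noteq> {0, 1::nat}"
  by (auto simp: doubleton_eq_iff)

lemma colouring_exists:
  assumes "simple_graph V E"
  shows "\<exists>c. proper_colouring V E (chromatic_number V E) c"
proof -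
  have fin: "finite V" using assms by (simp add: simple_graph_def)
  obtain h where h: "bij_betw h V {0..<card V}" using ex_bij_betw_finite_nat[OF fin] by blast
  have "proper_colouring V E (card V) h"
    unfolding proper_colouring_def
  proof safe
    fix v assume "v \<in> V" then show "h v < card V" using h by (auto simp: bij_betw_def)
  next
    fix x y assume "x \<in> V" "y \<in> V" "E x y" "h x = h y"
    then have "x = y" using h by (auto simp: bij_betw_def inj_on_def)
    then show False using \<open>E x y\<close> assms by (simp add: simple_graph_def)
  qed
  then have "\<exists>c. proper_colouring V E (card V) c" by blast
  then show ?thesis unfolding chromatic_number_def by (rule LeastI)
qed

theorem lemma8:
  fixes V :: "'a set" and E :: "'a \<Rightarrow> 'a \<Rightarrow> bool"
  assumes "simple_graph V E"
    and "has_edge V E"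
    and "primitive_on (graph_aut V E) V"
  shows "\<not> contains_Kn_minus_edge V E (chromatic_number V E + 1)"
proof
  define r where "r = chromatic_number V E"
  assume "contains_Kn_minus_edge V E (chromatic_number V E + 1)"
  then obtain \<phi> where P: "inj_on \<phi> {0..<r+1} \<and> \<phi> ` {0..<r+1} \<subseteq> V \<and>
     (\<forall>i<r+1. \<forall>j<r+1. i \<noteq> j \<and> {i, j} \<noteq> {0, 1} \<longrightarrow> E (\<phi> i) (\<phi> j))"
    unfolding contains_Kn_minus_edge_def r_def[symmetric] by (rule exE)
  have inj: "inj_on \<phi> {0..<r+1}" and sub: "\<phi> ` {0..<r+1} \<subseteq> V" using P by simp_all
  have edall: "\<forall>i<r+1. \<forall>j<r+1. i \<noteq> j \<and> {i, j} \<noteq> {0, 1} \<longrightarrow> E (\<phi> i) (\<phi> j)"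
    using P by (elim conjE)
  have ed: "E (\<phi> i) (\<phi> j)" if "i<r+1" "j<r+1" "i \<noteq> j" "{i, j} \<noteq> {0, 1}" for i j
    by (rule edall[rule_format, OF that(1) that(2) conjI[OF that(3) that(4)]])
  have sg: "\<And>x y. E x y \<Longrightarrow> x \<in> V \<and> y \<in> V" "\<And>x y. E x y \<Longrightarrow> E y x" "\<And>x. \<not> E x x"
    using assms(1) by (auto simp: simple_graph_def)
  obtain c0 where c0: "proper_colouring V E r c0" using colouring_exists[OF assms(1)] r_def by blast
  obtain a b where ab: "a \<in> V" "b \<in> V" "E a b" using assms(2) by (auto simp: has_edge_def)
  have r1: "r \<ge> 1"
  proof (rule ccontr)
    assume "\<not> r \<ge> 1" then have "r = 0" by simp
    with c0 ab show False by (auto simp: proper_colouring_def)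
  qed
  define W where "W = \<phi> ` {2..<r+1}"
  have key: "c (\<phi> 0) = c (\<phi> 1)" if c: "proper_colouring V E r c" for c
  proof -
    have cW: "card (c ` W) = r - 1"
    proof -
      have "inj_on (c \<circ> \<phi>) {2..<r+1}"
      proof (rule inj_onI)
        fix i j assume i: "i \<in> {2..<r+1}" and j: "j \<in> {2..<r+1}" and eq: "(c \<circ> \<phi>) i = (c \<circ> \<phi>) j"
        show "i = j"
        proof (rule ccontr)
          assume "i \<noteq> j"
          then have "E (\<phi> i) (\<phi> j)" using i j \<open>i \<noteq> j\<close> by (intro ed neq01) auto
          moreover have "\<phi> i \<in> V" "\<phi> j \<in> V" using sub i j by auto
          ultimately show False using c eq by (auto simp: proper_colouring_def)
        qed
      qed
      then have "card ((c \<circ> \<phi>) ` {2..<r+1}) = card {2..<r+1}" by (rule card_image)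
      then show ?thesis unfolding W_def by (simp add: image_comp)
    qed
    have miss: "c (\<phi> k) \<notin> c ` W \<and> c (\<phi> k) < r" if k: "k < 2" for k
    proof
      have pk: "\<phi> k \<in> V" using sub k r1 by auto
      show "c (\<phi> k) < r" using c pk by (auto simp: proper_colouring_def)
      show "c (\<phi> k) \<notin> c ` W"
      proof
        assume "c (\<phi> k) \<in> c ` W"
        then obtain j where j: "j \<in> {2..<r+1}" "c (\<phi> k) = c (\<phi> j)" unfolding W_def by auto
        have "E (\<phi> k) (\<phi> j)" using j k r1 by (intro ed neq01) auto
        moreover have "\<phi> j \<in> V" using sub j by auto
        ultimately show False using c pk j by (auto simp: proper_colouring_def)
      qed
    qed
    have WV: "W \<subseteq> V" using sub unfolding W_def by auto
    have Wsub: "c ` W \<subseteq> {0..<r}"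
      using c WV unfolding proper_colouring_def by auto
    have full: "insert (c (\<phi> 0)) (c ` W) = {0..<r}"
    proof (rule card_subset_eq)
      show "finite {0..<r}" by simp
      show "insert (c (\<phi> 0)) (c ` W) \<subseteq> {0..<r}" using Wsub miss[of 0] by auto
      have "finite (c ` W)" unfolding W_def by simp
      then show "card (insert (c (\<phi> 0)) (c ` W)) = card {0..<r}"
        using miss[of 0] cW r1 by simp
    qed
    have "c (\<phi> 1) \<in> {0..<r}" using miss[of 1] by simp
    then have "c (\<phi> 1) \<in> insert (c (\<phi> 0)) (c ` W)" using full by simp
    moreover have "c (\<phi> 1) \<notin> c ` W" using miss[of 1] by simp
    ultimately show ?thesis by auto
  qed
  define R where "R = {(x,y). x \<in> V \<and> y \<in> V \<and> (\<forall>c. proper_colouring V E r c \<longrightarrow> c x = c y)}"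
  have eqv: "equiv V R" unfolding R_def equiv_def refl_on_def sym_def trans_def by auto
  have pres: "\<forall>g\<in>graph_aut V E. \<forall>(x,y)\<in>R. (g x, g y) \<in> R"
  proof (intro ballI, clarify)
    fix g x y assume g: "g \<in> graph_aut V E" and xy: "(x, y) \<in> R"
    have gV: "\<And>z. z \<in> V \<Longrightarrow> g z \<in> V" using g by (auto simp: graph_aut_def bij_betw_def)
    have gE: "\<And>u v. u \<in> V \<Longrightarrow> v \<in> V \<Longrightarrow> E (g u) (g v) = E u v" using g by (auto simp: graph_aut_def)
    show "(g x, g y) \<in> R" unfolding R_def
    proof (clarsimp, intro conjI allI impI)
      show "g x \<in> V" "g y \<in> V" using xy gV by (auto simp: R_def)
      fix c assume c: "proper_colouring V E r c"
      have "proper_colouring V E r (c \<circ> g)"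
        using c gV gE unfolding proper_colouring_def by auto
      then show "c (g x) = c (g y)" using xy by (auto simp: R_def)
    qed
  qed
  have "R = Id_on V \<or> R = V \<times> V" using assms(3) eqv pres by (auto simp: primitive_on_def)
  moreover have "(\<phi> 0, \<phi> 1) \<in> R" using key sub r1 by (auto simp: R_def)
  moreover have "\<phi> 0 \<noteq> \<phi> 1" using inj_onD[OF inj, of 0 1] r1 by auto
  ultimately have "R = V \<times> V" by (auto simp: Id_on_def)
  then have "(a, b) \<in> R" using ab by auto
  then have "c0 a = c0 b" using c0 by (auto simp: R_def)
  then show False using c0 ab by (auto simp: proper_colouring_def)
qed

end
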